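(* Let $k\geq 1$, $m\neq 0$, and $K=J(2k+1,2m)$ with the knot group presentation $\langle a,b\mid w^m a=bw^m\rangle$, $w=(ba^{-1})^k ba(b^{-1}a)^k$. Let $\phi_K(x,y)$ be the Riley polynomial for this presentation, and put $\lambda=\lambda_k(x,y)=x^2-y-(y-2)(y+2-x^2)S_k(y)S_{k-1}(y)$ and $\alpha=\alpha_k(x,y)=1+(y+2-x^2)S_{k-1}(y)\big(S_k(y)-S_{k-1}(y)\big)$. Then if $m\geq 1$, $\phi_K(x,y)=S_{m-1}(\lambda)\,\alpha-S_{m-2}(\lambda)$; if $m\leq -1$, $\phi_K(x,y)=S_{|m|}(\lambda)-S_{|m|-1}(\lambda)\,\alpha$.
   Context: Chebyshev polynomials: $S_0(z)=1$, $S_1(z)=z$, $S_{n+1}(z)=zS_n(z)-S_{n-1}(z)$, with the convention $S_{-1}=0$. $J(2k+1,2m)$ is the double twist knot (two-bridge knot with twist regions of $2k+1$ and $2m$ signed half-twists) whose group has the stated presentation with $a,b$ meridians. Riley polynomial: for a presentation $\langle a,b\mid va=bv\rangle$ with $a,b$ meridians, set $A=\begin{bmatrix}s&1\\0&s^{-1}\end{bmatrix}$, $B=\begin{bmatrix}s&0\\2-y&s^{-1}\end{bmatrix}$, $V$ = $v$ evaluated at $A,B$; the $(1,2)$-entry of $VA-BV$ equals $f(s+s^{-1},y)$ for a polynomial $f\in\mathbb{Z}[x,y]$, and $\phi_K(x,y):=f(x,y)$ (here $v=w^m$). *)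

theory Defs
  imports "HOL-Analysis.Analysis"
begin

(* Chebyshev polynomials, shifted: cheb_aux n z = S_{n-1}(z), so cheb_aux 0 = S_{-1} = 0 *)
fun cheb_aux :: "nat \<Rightarrow> complex \<Rightarrow> complex" where
  "cheb_aux 0 z = 0"
| "cheb_aux (Suc 0) z = 1"
| "cheb_aux (Suc (Suc n)) z = z * cheb_aux (Suc n) z - cheb_aux n z"

definition cheb_S :: "int \<Rightarrow> complex \<Rightarrow> complex" where
  "cheb_S n z = cheb_aux (nat (n + 1)) z"

type_synonym cmat2 = "complex ^ 2 ^ 2"

definition mat2 :: "complex \<Rightarrow> complex \<Rightarrow> complex \<Rightarrow> complex \<Rightarrow> cmat2" where
  "mat2 p q r t = (\<chi> i j. if i = 1 then (if j = 1 then p else q) else (if j = 1 then r else t))"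

definition mpow :: "cmat2 \<Rightarrow> nat \<Rightarrow> cmat2" where
  "mpow M n = (((**) M) ^^ n) (mat 1)"

definition mzpow :: "cmat2 \<Rightarrow> int \<Rightarrow> cmat2" where
  "mzpow M n = (if n \<ge> 0 then mpow M (nat n) else mpow (matrix_inv M) (nat (- n)))"

definition riley_A :: "complex \<Rightarrow> cmat2" where
  "riley_A s = mat2 s 1 0 (inverse s)"

definition riley_B :: "complex \<Rightarrow> complex \<Rightarrow> cmat2" where
  "riley_B s y = mat2 s 0 (2 - y) (inverse s)"

definition word_W :: "nat \<Rightarrow> complex \<Rightarrow> complex \<Rightarrow> cmat2" where
  "word_W k s y = (let A = riley_A s; B = riley_B s y in
     mpow (B ** matrix_inv A) k ** B ** A ** mpow (matrix_inv B ** A) k)"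

definition riley_entry :: "nat \<Rightarrow> int \<Rightarrow> complex \<Rightarrow> complex \<Rightarrow> complex" where
  "riley_entry k m s y = (let A = riley_A s; B = riley_B s y; V = mzpow (word_W k s y) m in
     (V ** A - B ** V) $ 1 $ 2)"

definition lambda_k :: "nat \<Rightarrow> complex \<Rightarrow> complex \<Rightarrow> complex" where
  "lambda_k k x y = x^2 - y - (y - 2) * (y + 2 - x^2) * cheb_S (int k) y * cheb_S (int k - 1) y"

definition alpha_k :: "nat \<Rightarrow> complex \<Rightarrow> complex \<Rightarrow> complex" where
  "alpha_k k x y = 1 + (y + 2 - x^2) * cheb_S (int k - 1) y * (cheb_S (int k) y - cheb_S (int k - 1) y)"

end

theory Submission
  imports Defs
begin

lemma mat2_eq_iff: "mat2 a b c d = mat2 a' b' c' d' \<longleftrightarrow> a=a' \<and> b=b' \<and> c=c' \<and> d=d'"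
  by (auto simp: mat2_def vec_eq_iff forall_2)

lemma mat2_nth: "mat2 a b c d $ 1 $ 1 = a" "mat2 a b c d $ 1 $ 2 = b" "mat2 a b c d $ 2 $ 1 = c" "mat2 a b c d $ 2 $ 2 = d"
  by (simp_all add: mat2_def)

lemma mat2_mult: "mat2 a b c d ** mat2 e f g h = mat2 (a*e+b*g) (a*f+b*h) (c*e+d*g) (c*f+d*h)"
  by (simp add: mat2_def matrix_matrix_mult_def vec_eq_iff forall_2 sum_2)

lemma mat2_one: "mat 1 = mat2 1 0 0 1"
  by (simp add: mat2_def mat_def vec_eq_iff forall_2)

lemma mat2_diff: "mat2 a b c d - mat2 e f g h = mat2 (a-e) (b-f) (c-g) (d-h)"
  by (simp add: mat2_def vec_eq_iff forall_2)

lemma matrix_inv_eq: fixes M N :: cmat2 assumes "M ** N = mat 1" "N ** M = mat 1" shows "matrix_inv M = N"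
proof -
  let ?N = "matrix_inv M"
  have "M ** ?N = mat 1 \<and> ?N ** M = mat 1"
    unfolding matrix_inv_def by (rule someI[of _ N]) (use assms in auto)
  then have "?N = ?N ** (M ** N)" using assms by simp
  also have "\<dots> = N" using \<open>M ** ?N = mat 1 \<and> ?N ** M = mat 1\<close> by (simp add: matrix_mul_assoc)
  finally show ?thesis .
qed

lemma mat2_inv: assumes "a*d - b*c = 1" shows "matrix_inv (mat2 a b c d) = mat2 d (-b) (-c) a"
  apply (rule matrix_inv_eq) using assms by (simp_all add: mat2_mult mat2_one mat2_eq_iff algebra_simps)

lemma step_id: fixes a b c d p q :: complex assumes "a*d - b*c = 1"
  shows "mat2 a b c d ** mat2 (p * a - q) (p * b) (p * c) (p * d - q) =
     mat2 (((a+d)*p - q) * a - p) (((a+d)*p - q) * b) (((a+d)*p - q) * c) (((a+d)*p - q) * d - p)"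
  unfolding mat2_mult mat2_eq_iff using assms by algebra

lemma mpow_mat2: assumes "a*d - b*c = 1"
  shows "mpow (mat2 a b c d) (Suc n) = mat2 (cheb_aux (Suc n) (a+d) * a - cheb_aux n (a+d)) (cheb_aux (Suc n) (a+d) * b)
      (cheb_aux (Suc n) (a+d) * c) (cheb_aux (Suc n) (a+d) * d - cheb_aux n (a+d))"
proof (induction n)
  case 0 then show ?case by (simp add: mpow_def mat2_one mat2_mult)
next
  case (Suc n)
  have eq: "mpow (mat2 a b c d) (Suc (Suc n)) = mat2 a b c d ** mpow (mat2 a b c d) (Suc n)"
    by (simp add: mpow_def)
  show ?case unfolding eq Suc step_id[OF assms] by simp
qed

lemma cheb_cassini: "(cheb_aux (Suc n) y)^2 - y * cheb_aux (Suc n) y * cheb_aux n y + (cheb_aux n y)^2 = 1"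
  by (induction n) (simp_all add: algebra_simps power2_eq_square)


lemma invA: "s \<noteq> 0 \<Longrightarrow> matrix_inv (riley_A s) = mat2 (inverse s) (-1) 0 s"
  unfolding riley_A_def by (subst mat2_inv) simp_all
lemma invB: "s \<noteq> 0 \<Longrightarrow> matrix_inv (riley_B s y) = mat2 (inverse s) 0 (y-2) s"
  unfolding riley_B_def by (subst mat2_inv) simp_all

lemma P_eq: "s \<noteq> 0 \<Longrightarrow> riley_B s y ** matrix_inv (riley_A s) = mat2 1 (- s) ((2-y)*inverse s) (y - 1)"
  by (simp add: invA riley_B_def mat2_mult mat2_eq_iff)
lemma Q_eq: "s \<noteq> 0 \<Longrightarrow> matrix_inv (riley_B s y) ** riley_A s = mat2 1 (inverse s) ((y - 2) * s) (y - 1)"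
  by (simp add: invB riley_A_def mat2_mult mat2_eq_iff)

lemma Pk: "s \<noteq> 0 \<Longrightarrow> mpow (riley_B s y ** matrix_inv (riley_A s)) (Suc j) =
   mat2 (cheb_aux (Suc j) y - cheb_aux j y) (- cheb_aux (Suc j) y * s) (cheb_aux (Suc j) y * ((2-y)*inverse s)) (cheb_aux (Suc j) y * (y-1) - cheb_aux j y)"
  unfolding P_eq by (subst mpow_mat2) (simp_all add: algebra_simps)
lemma Qk: "s \<noteq> 0 \<Longrightarrow> mpow (matrix_inv (riley_B s y) ** riley_A s) (Suc j) =
   mat2 (cheb_aux (Suc j) y - cheb_aux j y) (cheb_aux (Suc j) y * inverse s) (cheb_aux (Suc j) y * ((y - 2) * s)) (cheb_aux (Suc j) y * (y-1) - cheb_aux j y)"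
  unfolding Q_eq by (subst mpow_mat2) (simp_all add: field_simps)

lemma W_eq: "s \<noteq> 0 \<Longrightarrow> word_W (Suc j) s y = (let u = cheb_aux (Suc j) y; v = cheb_aux j y; t = inverse s in
   mat2 (u - v) (- u * s) (u * ((2-y)*t)) (u * (y-1) - v) ** mat2 s 0 (2 - y) t ** mat2 s 1 0 t **
   mat2 (u - v) (u * t) (u * ((y - 2) * s)) (u * (y-1) - v))"
  unfolding word_W_def Let_def Pk Qk by (simp add: riley_A_def riley_B_def)


definition w11 :: "complex \<Rightarrow> complex \<Rightarrow> complex \<Rightarrow> complex \<Rightarrow> complex \<Rightarrow> complex" where "w11 s t y u v = ((1) * s^2 * v^2 + (2) * s^2 * u * v + (1) * s^2 * u^2 + (- 2) * s^2 * y * u * v + (- 2) * s^2 * y * u^2 + (1) * s^2 * y^2 * u^2 + (2) * s^2 * t^2 * u^2 + (- 1) * s^2 * t^2 * y * u^2)"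
definition w12 :: "complex \<Rightarrow> complex \<Rightarrow> complex \<Rightarrow> complex \<Rightarrow> complex \<Rightarrow> complex" where "w12 s t y u v = ((1) * s * v^2 + (2) * s * u * v + (1) * s * u^2 + (- 2) * s * y * u * v + (- 2) * s * y * u^2 + (1) * s * y^2 * u^2 + (1) * s * t^2 * u * v + (1) * s * t^2 * u^2 + (- 1) * s * t^2 * y * u^2 + (- 1) * s^2 * t * u * v + (- 1) * s^2 * t * u^2 + (1) * s^2 * t * y * u^2)"
definition w21 :: "complex \<Rightarrow> complex \<Rightarrow> complex \<Rightarrow> complex \<Rightarrow> complex \<Rightarrow> complex" where "w21 s t y u v = ((2) * s * v^2 + (4) * s * u * v + (2) * s * u^2 + (- 1) * s * y * v^2 + (- 6) * s * y * u * v + (- 5) * s * y * u^2 + (2) * s * y^2 * u * v + (4) * s * y^2 * u^2 + (- 1) * s * y^3 * u^2 + (2) * s * t^2 * u * v + (2) * s * t^2 * u^2 + (- 1) * s * t^2 * y * u * v + (- 3) * s * t^2 * y * u^2 + (1) * s * t^2 * y^2 * u^2 + (- 2) * s^2 * t * u * v + (- 2) * s^2 * t * u^2 + (1) * s^2 * t * y * u * v + (3) * s^2 * t * y * u^2 + (- 1) * s^2 * t * y^2 * u^2)"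
definition w22 :: "complex \<Rightarrow> complex \<Rightarrow> complex \<Rightarrow> complex \<Rightarrow> complex \<Rightarrow> complex" where "w22 s t y u v = ((2) * v^2 + (4) * u * v + (2) * u^2 + (- 1) * y * v^2 + (- 6) * y * u * v + (- 5) * y * u^2 + (2) * y^2 * u * v + (4) * y^2 * u^2 + (- 1) * y^3 * u^2 + (1) * t^2 * v^2 + (2) * t^2 * u * v + (1) * t^2 * u^2 + (- 2) * t^2 * y * u * v + (- 2) * t^2 * y * u^2 + (1) * t^2 * y^2 * u^2 + (- 4) * s * t * u * v + (- 4) * s * t * u^2 + (2) * s * t * y * u * v + (6) * s * t * y * u^2 + (- 2) * s * t * y^2 * u^2 + (2) * s^2 * t^2 * u^2 + (- 1) * s^2 * t^2 * y * u^2)"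
definition q_tr :: "complex \<Rightarrow> complex \<Rightarrow> complex \<Rightarrow> complex \<Rightarrow> complex \<Rightarrow> complex" where "q_tr s t y u v = ((2) + (- 1) * y + (1) * t^2 + (1) * s^2)"
definition r_tr :: "complex \<Rightarrow> complex \<Rightarrow> complex \<Rightarrow> complex \<Rightarrow> complex \<Rightarrow> complex" where "r_tr s t y u v = ((- 2) + (- 8) * u * v + (4) * y * u * v + (8) * y * u^2 + (- 4) * y^2 * u^2 + (4) * s * t * u^2 + (- 2) * s * t * y * u^2)"
definition q_al :: "complex \<Rightarrow> complex \<Rightarrow> complex \<Rightarrow> complex \<Rightarrow> complex \<Rightarrow> complex" where "q_al s t y u v = ((1))"
definition r_al :: "complex \<Rightarrow> complex \<Rightarrow> complex \<Rightarrow> complex \<Rightarrow> complex \<Rightarrow> complex" where "r_al s t y u v = ((1) * v^2 + (- 2) * u * v + (- 1) * u^2 + (- 2) * y * u * v + (1) * y * u^2 + (1) * y^2 * u^2 + (1) * t^2 * u * v + (1) * t^2 * u^2 + (- 1) * t^2 * y * u^2 + (- 2) * s * t * u * v + (1) * s * t * y * u^2 + (1) * s^2 * u * v + (1) * s^2 * u^2 + (- 1) * s^2 * y * u^2)"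
definition q_det :: "complex \<Rightarrow> complex \<Rightarrow> complex \<Rightarrow> complex \<Rightarrow> complex \<Rightarrow> complex" where "q_det s t y u v = ((1) + (1) * v^2 + (1) * u^2 + (- 1) * y * u * v)"
definition r_det :: "complex \<Rightarrow> complex \<Rightarrow> complex \<Rightarrow> complex \<Rightarrow> complex \<Rightarrow> complex" where "r_det s t y u v = ((1) * v^4 + (2) * u^2 * v^2 + (1) * u^4 + (- 2) * y * u * v^3 + (- 2) * y * u^3 * v + (1) * y^2 * u^2 * v^2 + (1) * s * t * v^4 + (2) * s * t * u^2 * v^2 + (1) * s * t * u^4 + (- 2) * s * t * y * u * v^3 + (- 2) * s * t * y * u^3 * v + (1) * s * t * y^2 * u^2 * v^2 + (4) * s^2 * t^2 * u^2 * v^2 + (- 2) * s^2 * t^2 * y * u^2 * v^2 + (- 4) * s^2 * t^2 * y * u^3 * v + (2) * s^2 * t^2 * y * u^4 + (2) * s^2 * t^2 * y^2 * u^3 * v + (- 1) * s^2 * t^2 * y^2 * u^4 + (4) * s^3 * t^3 * u^4 + (- 4) * s^3 * t^3 * y * u^4 + (1) * s^3 * t^3 * y^2 * u^4)"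

lemma prod_eq: fixes s t y u v :: complex shows "mat2 (u - v) (- u * s) (u * ((2-y) * t)) (u * (y-1) - v) ** mat2 s 0 (2 - y) t ** mat2 s 1 0 t ** mat2 (u - v) (u * t) (u * ((y - 2) * s)) (u * (y-1) - v) = mat2 (w11 s t y u v) (w12 s t y u v) (w21 s t y u v) (w22 s t y u v)"
  unfolding mat2_mult mat2_eq_iff w11_def w12_def w21_def w22_def by (intro conjI; algebra)

lemma cert_tr: fixes s t y u v :: complex shows "w11 s t y u v + w22 s t y u v - ((s+t)^2 - y - (y-2) * (y+2-(s+t)^2) * (y * u - v) * u) = q_tr s t y u v * (u^2 - y * u * v + v^2 - 1) + r_tr s t y u v * (s * t - 1)"
  unfolding w11_def w22_def q_tr_def r_tr_def by algebra
lemma cert_al: fixes s t y u v :: complex shows "w11 s t y u v - w12 s t y u v * (s - t) - (1 + (y+2-(s+t)^2) * u * ((y * u-v) - u)) = q_al s t y u v * (u^2 - y * u * v + v^2 - 1) + r_al s t y u v * (s * t - 1)"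
  unfolding w11_def w12_def q_al_def r_al_def by algebra
lemma cert_det: fixes s t y u v :: complex shows "w11 s t y u v * w22 s t y u v - w12 s t y u v * w21 s t y u v - 1 = q_det s t y u v * (u^2 - y * u * v + v^2 - 1) + r_det s t y u v * (s * t - 1)"
  unfolding w11_def w12_def w21_def w22_def q_det_def r_det_def by algebra


lemma W_props: fixes s y :: complex assumes "s \<noteq> 0" "k \<ge> 1"
  shows "\<exists>a b c d. word_W k s y = mat2 a b c d \<and> a*d - b*c = 1 \<and> a + d = lambda_k k (s + inverse s) y
     \<and> a - b * (s - inverse s) = alpha_k k (s + inverse s) y"
proof -
  obtain j where k: "k = Suc j" using assms(2) by (cases k) auto
  define u where "u = cheb_aux (Suc j) y"
  define v where "v = cheb_aux j y"
  define t where "t = inverse s"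
  have st: "s * t - 1 = 0" using assms(1) by (simp add: t_def)
  have cas: "u^2 - y * u * v + v^2 - 1 = 0" using cheb_cassini[of j y] by (simp add: u_def v_def)
  have Sk: "cheb_S (int k) y = y * u - v" by (simp add: cheb_S_def k u_def v_def nat_add_distrib)
  have Sk1: "cheb_S (int k - 1) y = u" by (simp add: cheb_S_def k u_def nat_add_distrib)
  have W: "word_W k s y = mat2 (w11 s t y u v) (w12 s t y u v) (w21 s t y u v) (w22 s t y u v)"
    unfolding k W_eq[OF assms(1)] Let_def u_def[symmetric] v_def[symmetric] t_def[symmetric] prod_eq ..
  show ?thesis
  proof (intro exI conjI, rule W)
    show "w11 s t y u v * w22 s t y u v - w12 s t y u v * w21 s t y u v = 1"
      using cert_det[of s t y u v] st cas by simp
    show "w11 s t y u v + w22 s t y u v = lambda_k k (s + inverse s) y"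
    proof -
      have "w11 s t y u v + w22 s t y u v - ((s+t)^2 - y - (y-2) * (y+2-(s+t)^2) * (y * u - v) * u) = 0" using cert_tr[of s t y u v] unfolding st cas by simp
      then have "w11 s t y u v + w22 s t y u v = ((s+t)^2 - y - (y-2) * (y+2-(s+t)^2) * (y * u - v) * u)" by simp
      then show ?thesis unfolding lambda_k_def Sk Sk1 t_def[symmetric] by simp
    qed
    show "w11 s t y u v - w12 s t y u v * (s - inverse s) = alpha_k k (s + inverse s) y"
    proof -
      have "w11 s t y u v - w12 s t y u v * (s - t) - (1 + (y+2-(s+t)^2) * u * ((y * u-v) - u)) = 0" using cert_al[of s t y u v] unfolding st cas by simp
      then have "w11 s t y u v - w12 s t y u v * (s - t) = (1 + (y+2-(s+t)^2) * u * ((y * u-v) - u))" by simp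
      then show ?thesis unfolding alpha_k_def Sk Sk1 t_def[symmetric] by simp
    qed
  qed
qed

theorem proposition4p4:
  fixes k :: nat and m :: int and s y :: complex
  assumes "k \<ge> 1" and "m \<noteq> 0" and "s \<noteq> 0"
  shows "riley_entry k m s y =
    (let x = s + inverse s; l = lambda_k k x y; a = alpha_k k x y in
      if m \<ge> 1 then cheb_S (m - 1) l * a - cheb_S (m - 2) l
      else cheb_S (\<bar>m\<bar>) l - cheb_S (\<bar>m\<bar> - 1) l * a)"
proof -
  obtain a b c d where W: "word_W k s y = mat2 a b c d" and det: "a*d - b*c = 1"
    and tr: "a + d = lambda_k k (s + inverse s) y" and al: "a - b * (s - inverse s) = alpha_k k (s + inverse s) y"
    using W_props[OF assms(3,1)] by blast
  define l where "l = a + d"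
  show ?thesis
  proof (cases "m \<ge> 1")
    case True
    define n where "n = nat (m - 1)"
    have m: "m = int (Suc n)" using True by (simp add: n_def)
    have V: "mzpow (word_W k s y) m = mat2 (cheb_aux (Suc n) l * a - cheb_aux n l) (cheb_aux (Suc n) l * b)
      (cheb_aux (Suc n) l * c) (cheb_aux (Suc n) l * d - cheb_aux n l)"
    proof -
      have nm: "nat m = Suc n" by (simp add: m)
      show ?thesis
      unfolding mzpow_def W l_def using True by (simp add: nm mpow_mat2[OF det])
    qed
    have c1: "cheb_S (m - 1) l = cheb_aux (Suc n) l" and c0: "cheb_S (m - 2) l = cheb_aux n l"
      by (simp_all add: cheb_S_def m nat_add_distrib)
    show ?thesis
      unfolding riley_entry_def Let_def V using True
      by (simp add: riley_A_def riley_B_def mat2_mult mat2_diff mat2_nth c1 c0 flip: tr al l_def) (simp add: algebra_simps)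
  next
    case False
    define n where "n = nat (- m - 1)"
    have m: "m = - int (Suc n)" using False assms(2) by (simp add: n_def)
    have inv: "matrix_inv (mat2 a b c d) = mat2 d (-b) (-c) a" by (rule mat2_inv[OF det])
    have det': "d * a - (-b) * (-c) = 1" using det by (simp add: algebra_simps)
    have V: "mzpow (word_W k s y) m = mat2 (cheb_aux (Suc n) l * d - cheb_aux n l) (cheb_aux (Suc n) l * (-b))
      (cheb_aux (Suc n) l * (-c)) (cheb_aux (Suc n) l * a - cheb_aux n l)"
    proof -
      have nm: "nat (- m) = Suc n" by (simp add: m)
      have mneg: "\<not> 0 \<le> m" by (simp add: m)
      show ?thesis unfolding mzpow_def W inv l_def using False mpow_mat2[OF det', of n] by (simp add: nm mneg add.commute)
    qed
    have absm: "\<bar>m\<bar> = - m" by (simp add: m)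
    have c1: "cheb_S (- m) l = l * cheb_aux (Suc n) l - cheb_aux n l" and c0: "cheb_S (- m - 1) l = cheb_aux (Suc n) l"
      by (simp_all add: cheb_S_def m nat_add_distrib)
    show ?thesis
      unfolding riley_entry_def Let_def V using False
      by (simp add: riley_A_def riley_B_def mat2_mult mat2_diff mat2_nth absm c1 c0 flip: tr al l_def) (simp add: l_def algebra_simps)
  qed
qed

end
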